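(* Let $\kappa$ be a standard kernel, let $F$ be a fixed finite simple graph on vertex set $\{1,\dots,k\}$ with edge set $E(F)$, let $H$ be a fixed graph on vertex set $\{1,\dots,n\}$ ($n\ge k$, $n\ge2$) with $m$ edges, and let $x=(x_1,\dots,x_n)\in[0,1]^n$ be fixed. Define $$T_F(z_1,\dots,z_k)=\prod_{\{i,j\}\in E(F)}\kappa(z_i,z_j),\qquad \mu_F(x)=\frac1{(n)_k}\sum_{(i_1,\dots,i_k)}T_F(x_{i_1},\dots,x_{i_k}),$$ where the sum runs over all $k$-tuples of pairwise distinct indices in $\{1,\dots,n\}$. Then for every $\varepsilon>m\frac{k(k-1)}{n(n-1)}$, $$\mathbb{P}\big[|t(F,G(x,H,\kappa))-\mu_F(x)|>\varepsilon\big]\le 2\exp\left(-\frac{2\big(\varepsilon-m\frac{k(k-1)}{n(n-1)}\big)^2}{\big(\binom n2-m\big)\big(\frac{k(k-1)}{n(n-1)}\big)^2}\right).$$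
   Context: A standard kernel is a measurable symmetric function $\kappa:[0,1]^2\to[0,1]$. $(n)_k=n(n-1)\cdots(n-k+1)$. For graphs $F$ on $k$ vertices and $G$ on $n$ vertices, $t(F,G)=|\mathrm{inj}(F,G)|/(n)_k$, where $\mathrm{inj}(F,G)$ is the set of injective maps from vertices of $F$ to vertices of $G$ mapping edges to edges. The random graph $G(x,H,\kappa)$ on $\{1,\dots,n\}$: each edge $\{i,j\}$ of $H$ is present; each non-edge $\{i,j\}$ of $H$ is present independently with probability $\kappa(x_i,x_j)$. *)

theory Defs
  imports "HOL-Probability.Probability"
begin

definition simple_graph_on :: "nat set \<Rightarrow> nat set set \<Rightarrow> bool" where
  "simple_graph_on V E \<longleftrightarrow> (\<forall>e\<in>E. e \<subseteq> V \<and> card e = 2)"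

definition standard_kernel :: "(real \<Rightarrow> real \<Rightarrow> real) \<Rightarrow> bool" where
  "standard_kernel \<kappa> \<longleftrightarrow>
     (\<lambda>(a,b). \<kappa> a b) \<in> borel_measurable (restrict_space borel ({0..1} \<times> {0..1})) \<and>
     (\<forall>a\<in>{0..1}. \<forall>b\<in>{0..1}. \<kappa> a b = \<kappa> b a \<and> 0 \<le> \<kappa> a b \<and> \<kappa> a b \<le> 1)"

definition falling :: "nat \<Rightarrow> nat \<Rightarrow> real" where
  "falling n k = (\<Prod>i<k. real n - real i)"

definition inj_hom :: "nat \<Rightarrow> nat set set \<Rightarrow> nat \<Rightarrow> nat set set \<Rightarrow> (nat \<Rightarrow> nat) set" where
  "inj_hom k EF n EG = {f \<in> {1..k} \<rightarrow>\<^sub>E {1..n}. inj_on f {1..k} \<and> (\<forall>e\<in>EF. f ` e \<in> EG)}"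

definition hom_density :: "nat \<Rightarrow> nat set set \<Rightarrow> nat \<Rightarrow> nat set set \<Rightarrow> real" where
  "hom_density k EF n EG = real (card (inj_hom k EF n EG)) / falling n k"

definition edge_val :: "(real \<Rightarrow> real \<Rightarrow> real) \<Rightarrow> (nat \<Rightarrow> real) \<Rightarrow> nat set \<Rightarrow> real" where
  "edge_val \<kappa> z e = \<kappa> (z (Min e)) (z (Max e))"

definition T_F :: "(real \<Rightarrow> real \<Rightarrow> real) \<Rightarrow> nat set set \<Rightarrow> (nat \<Rightarrow> real) \<Rightarrow> real" where
  "T_F \<kappa> EF z = (\<Prod>e\<in>EF. edge_val \<kappa> z e)"

definition mu_F :: "(real \<Rightarrow> real \<Rightarrow> real) \<Rightarrow> nat \<Rightarrow> nat set set \<Rightarrow> nat \<Rightarrow> (nat \<Rightarrow> real) \<Rightarrow> real" where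
  "mu_F \<kappa> k EF n x =
     (\<Sum>f\<in>{f \<in> {1..k} \<rightarrow>\<^sub>E {1..n}. inj_on f {1..k}}. T_F \<kappa> EF (x \<circ> f)) / falling n k"

definition all_pairs :: "nat \<Rightarrow> nat set set" where
  "all_pairs n = {e. e \<subseteq> {1..n} \<and> card e = 2}"

text \<open>The random graph G(x,H,kappa), as a distribution on edge sets: edges of H are present,
  every non-edge e = {i,j} of H is present independently with probability kappa(x_i,x_j).\<close>
definition random_graph :: "nat \<Rightarrow> (nat \<Rightarrow> real) \<Rightarrow> nat set set \<Rightarrow> (real \<Rightarrow> real \<Rightarrow> real)
    \<Rightarrow> nat set set pmf" where
  "random_graph n x EH \<kappa> =
     map_pmf (\<lambda>c. EH \<union> {e \<in> all_pairs n - EH. c e})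
       (Pi_pmf (all_pairs n - EH) False (\<lambda>e. bernoulli_pmf (edge_val \<kappa> x e)))"

end

theory Submission
  imports Defs
begin


lemma card_product_dependent':
  assumes "finite S"
    and "\<forall>x \<in> S. finite (T x)"
  shows "card {(x, y). x \<in> S \<and> y \<in> T x} = (\<Sum>x \<in> S. card (T x))"
  using card_SigmaI[OF assms, symmetric]
  by (auto intro!: arg_cong[where f=card] simp add: Sigma_def)

lemma card_inj_funcset:
  assumes "finite S" "finite T" "card S \<le> card T"
  shows "real (card {f \<in> S \<rightarrow>\<^sub>E T. inj_on f S}) = (\<Prod>i<card S. real (card T) - real i)"
  using assms
proof (induct S arbitrary: T rule: finite_induct)
  case empty
  then show ?case by (simp add: Collect_conv_if PiE_empty_domain)
next
  case (insert x S)
  have finite_delete: "finite {f \<in> S \<rightarrow>\<^sub>E (T - {y}). inj_on f S}" for y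
  proof -
    have "finite (S \<rightarrow>\<^sub>E (T - {y}))" using insert by (intro finite_PiE) auto
    then show ?thesis by (rule finite_subset[rotated]) auto
  qed
  have hyps: "real (card {g \<in> S \<rightarrow>\<^sub>E (T - {y}). inj_on g S}) =
      (\<Prod>i<card S. real (card T) - 1 - real i)" if "y \<in> T" for y
  proof -
    have "card (T - {y}) = card T - 1" using that insert by simp
    moreover have "card T \<ge> 1" using that insert by (metis card_0_eq empty_iff less_one not_le)
    ultimately show ?thesis using insert(3)[of "T - {y}"] insert that by (simp add: of_nat_diff)
  qed
  have "card {f. f \<in> (insert x S) \<rightarrow>\<^sub>E T \<and> inj_on f (insert x S)} =
      card ((\<lambda>(y, g). g(x := y)) ` {(y, g). y \<in> T \<and> g \<in> S \<rightarrow>\<^sub>E (T - {y}) \<and> inj_on g S})"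
    using extensional_funcset_extend_domain_inj_on_eq[OF \<open>x \<notin> S\<close>] by metis
  also have "\<dots> = card {(y, g). y \<in> T \<and> g \<in> S \<rightarrow>\<^sub>E (T - {y}) \<and> inj_on g S}"
    using extensional_funcset_extend_domain_inj_onI[OF \<open>x \<notin> S\<close>, of T] by (simp add: card_image)
  also have "{(y, g). y \<in> T \<and> g \<in> S \<rightarrow>\<^sub>E (T - {y}) \<and> inj_on g S} =
      {(y, g). y \<in> T \<and> g \<in> {f \<in> S \<rightarrow>\<^sub>E (T - {y}). inj_on f S}}"
    by auto
  also have "card \<dots> = (\<Sum>y \<in> T. card {g \<in> S \<rightarrow>\<^sub>E (T - {y}). inj_on g S})"
    using \<open>finite T\<close> finite_delete by (subst card_product_dependent') auto
  finally have "real (card {f \<in> (insert x S) \<rightarrow>\<^sub>E T. inj_on f (insert x S)})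
      = (\<Sum>y \<in> T. real (card {g \<in> S \<rightarrow>\<^sub>E (T - {y}). inj_on g S}))" by simp
  also have "\<dots> = (\<Sum>y \<in> T. (\<Prod>i<card S. real (card T) - 1 - real i))"
    using hyps by simp
  also have "\<dots> = real (card T) * (\<Prod>i<card S. real (card T) - real (Suc i))"
    by (simp add: algebra_simps)
  also have "\<dots> = (\<Prod>i<card (insert x S). real (card T) - real i)"
  proof -
    have "card (insert x S) = Suc (card S)" using insert by simp
    then show ?thesis by (simp only: prod.lessThan_Suc_shift of_nat_0 diff_zero)
  qed
  finally show ?case .
qed

lemma card_Inj:
  assumes "k \<le> n"
  shows "real (card {f \<in> {1..k} \<rightarrow>\<^sub>E {1..n}. inj_on f {1..k}}) = falling n k"
  using card_inj_funcset[of "{1..k}" "{1..n::nat}"] assms by (simp add: falling_def)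

lemma card_all_pairs: "card (all_pairs n) = n choose 2"
  unfolding all_pairs_def using n_subsets[of "{1..n}" 2] by simp

lemma finite_all_pairs: "finite (all_pairs n)"
  unfolding all_pairs_def by (rule finite_subset[of _ "Pow {1..n}"]) auto

lemma real_choose_two: "real (n choose 2) = real n * (real n - 1) / 2"
proof -
  have "even (n * (n - 1))" by (cases "even n") auto
  then have "2 * (n choose 2) = n * (n - 1)" unfolding choose_two by simp
  then have "2 * real (n choose 2) = real n * real (n - 1)" by (metis of_nat_mult of_nat_numeral)
  then show ?thesis by (cases n) auto
qed

lemma exists_perm_pair:
  assumes "h \<in> all_pairs n" "h' \<in> all_pairs n"
  shows "\<exists>\<sigma>. \<sigma> ` {1..n} \<subseteq> {1..n} \<and> inj_on \<sigma> {1..n} \<and> \<sigma> ` h = h'"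
proof -
  have h: "h \<subseteq> {1..n}" "card h = 2" and h': "h' \<subseteq> {1..n}" "card h' = 2"
    using assms by (auto simp: all_pairs_def)
  have fh: "finite h" "finite h'" using h h' by (auto intro: finite_subset)
  obtain s1 where s1: "bij_betw s1 h h'" using finite_same_card_bij[OF fh] h h' by auto
  have "card ({1..n} - h) = card ({1..n} - h')"
    using h h' fh by (simp only: card_Diff_subset finite_atLeastAtMost)
  then obtain s2 where s2: "bij_betw s2 ({1..n} - h) ({1..n} - h')"
    using finite_same_card_bij[of "{1..n} - h" "{1..n} - h'"] by blast
  define \<sigma> where "\<sigma> = (\<lambda>x. if x \<in> h then s1 x else s2 x)"
  have b: "bij_betw \<sigma> (h \<union> ({1..n} - h)) (h' \<union> ({1..n} - h'))"
    unfolding \<sigma>_def by (rule bij_betw_disjoint_Un[OF s1 s2]) blast+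
  have e1: "h \<union> ({1..n} - h) = {1..n}" "h' \<union> ({1..n} - h') = {1..n}" using h h' by blast+
  have b': "bij_betw \<sigma> {1..n} {1..n}" using b by (simp only: e1)
  have "\<sigma> ` h = s1 ` h" unfolding \<sigma>_def by (rule image_cong) auto
  also have "\<dots> = h'" using s1 by (rule bij_betw_imp_surj_on)
  finally have "\<sigma> ` h = h'" .
  then show ?thesis using b' unfolding bij_betw_def by blast
qed

definition Sfib :: "nat \<Rightarrow> nat \<Rightarrow> nat set \<Rightarrow> nat set \<Rightarrow> (nat \<Rightarrow> nat) set" where
  "Sfib k n e h = {\<phi> \<in> {1..k} \<rightarrow>\<^sub>E {1..n}. inj_on \<phi> {1..k} \<and> \<phi> ` e = h}"

lemma finite_Inj: "finite {f \<in> {1..k::nat} \<rightarrow>\<^sub>E {1..n::nat}. P f}"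
  by (rule finite_subset[OF _ finite_PiE[of "{1..k}" "\<lambda>_. {1..n}"]]) auto

lemma finite_Sfib: "finite (Sfib k n e h)"
  unfolding Sfib_def by (rule finite_Inj)

lemma card_Sfib_le:
  assumes "e \<subseteq> {1..k}" "h \<in> all_pairs n" "h' \<in> all_pairs n"
  shows "card (Sfib k n e h) \<le> card (Sfib k n e h')"
proof -
  obtain \<sigma> where s: "\<sigma> ` {1..n} \<subseteq> {1..n}" "inj_on \<sigma> {1..n}" "\<sigma> ` h = h'"
    using exists_perm_pair[OF assms(2,3)] by blast
  define \<Psi> where "\<Psi> \<phi> = restrict (\<sigma> \<circ> \<phi>) {1..k}" for \<phi> :: "nat \<Rightarrow> nat"
  have "\<Psi> ` Sfib k n e h \<subseteq> Sfib k n e h'"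
  proof
    fix \<psi> assume "\<psi> \<in> \<Psi> ` Sfib k n e h"
    then obtain \<phi> where \<phi>: "\<phi> \<in> Sfib k n e h" and psi: "\<psi> = \<Psi> \<phi>" by auto
    have p1: "\<phi> \<in> {1..k} \<rightarrow>\<^sub>E {1..n}" "inj_on \<phi> {1..k}" "\<phi> ` e = h" using \<phi> by (auto simp: Sfib_def)
    have "\<sigma> (\<phi> i) \<in> {1..n}" if "i \<in> {1..k}" for i
      using PiE_mem[OF p1(1) that] s(1) by blast
    then have "\<psi> \<in> {1..k} \<rightarrow>\<^sub>E {1..n}" unfolding psi \<Psi>_def
      by (simp only: restrict_PiE_iff comp_apply) blast
    moreover have "inj_on (\<sigma> \<circ> \<phi>) {1..k}"
    proof (rule comp_inj_on[OF p1(2)])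
      have "\<phi> ` {1..k} \<subseteq> {1..n}" using PiE_mem[OF p1(1)] by blast
      then show "inj_on \<sigma> (\<phi> ` {1..k})" by (rule inj_on_subset[OF s(2)])
    qed
    then have "inj_on \<psi> {1..k}" unfolding psi \<Psi>_def by (simp only: inj_on_restrict_eq)
    moreover have "\<psi> ` e = h'"
    proof -
      have "\<psi> ` e = (\<sigma> \<circ> \<phi>) ` e" unfolding psi \<Psi>_def using assms(1) by (intro image_cong) auto
      also have "\<dots> = h'" using p1(3) s(3) by (simp only: image_comp[symmetric])
      finally show ?thesis .
    qed
    ultimately show "\<psi> \<in> Sfib k n e h'" by (simp add: Sfib_def)
  qed
  moreover have "inj_on \<Psi> (Sfib k n e h)"
  proof (rule inj_onI)
    fix \<phi>1 \<phi>2 assume a: "\<phi>1 \<in> Sfib k n e h" "\<phi>2 \<in> Sfib k n e h" "\<Psi> \<phi>1 = \<Psi> \<phi>2"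
    show "\<phi>1 = \<phi>2"
    proof
      fix i show "\<phi>1 i = \<phi>2 i"
      proof (cases "i \<in> {1..k}")
        case True
        then have "\<Psi> \<phi>1 i = \<sigma> (\<phi>1 i)" "\<Psi> \<phi>2 i = \<sigma> (\<phi>2 i)" by (simp_all only: \<Psi>_def restrict_apply' comp_apply)
        then have "\<sigma> (\<phi>1 i) = \<sigma> (\<phi>2 i)" using a(3) by metis
        moreover have "\<phi>1 i \<in> {1..n}" "\<phi>2 i \<in> {1..n}" using a(1,2) True PiE_mem unfolding Sfib_def by blast+
        ultimately show ?thesis using inj_onD[OF s(2)] by blast
      next
        case False
        have "\<phi>1 \<in> {1..k} \<rightarrow>\<^sub>E {1..n}" "\<phi>2 \<in> {1..k} \<rightarrow>\<^sub>E {1..n}" using a(1,2) unfolding Sfib_def by blast+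
        then show ?thesis using False PiE_arb by metis
      qed
    qed
  qed
  ultimately show ?thesis by (intro card_inj_on_le[OF _ _ finite_Sfib])
qed

lemma card_Sfib_eq:
  assumes "e \<subseteq> {1..k}" "h \<in> all_pairs n" "h' \<in> all_pairs n"
  shows "card (Sfib k n e h) = card (Sfib k n e h')"
  using card_Sfib_le[OF assms] card_Sfib_le[OF assms(1,3,2)] by simp

lemma card_Sfib:
  assumes "e \<subseteq> {1..k}" "card e = 2" "k \<le> n" "h \<in> all_pairs n"
  shows "real (card (Sfib k n e h)) * real (n choose 2) = falling n k"
proof -
  have "{f \<in> {1..k} \<rightarrow>\<^sub>E {1..n}. inj_on f {1..k}} = (\<Union>h'\<in>all_pairs n. Sfib k n e h')"
  proof (intro equalityI subsetI)
    fix \<phi> assume \<phi>: "\<phi> \<in> {f \<in> {1..k} \<rightarrow>\<^sub>E {1..n}. inj_on f {1..k}}"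
    have "\<phi> ` e \<subseteq> {1..n}" using \<phi> assms(1) by (auto simp: PiE_def Pi_def)
    moreover have "card (\<phi> ` e) = 2"
      using \<phi> assms(1,2) by (subst card_image) (auto intro: inj_on_subset)
    ultimately have "\<phi> ` e \<in> all_pairs n" by (simp add: all_pairs_def)
    then show "\<phi> \<in> (\<Union>h'\<in>all_pairs n. Sfib k n e h')" using \<phi> by (auto simp: Sfib_def)
  qed (auto simp: Sfib_def)
  then have "card {f \<in> {1..k} \<rightarrow>\<^sub>E {1..n}. inj_on f {1..k}} = (\<Sum>h'\<in>all_pairs n. card (Sfib k n e h'))"
    by (simp only:) (rule card_UN_disjoint, simp add: finite_all_pairs, simp add: finite_Sfib, auto simp: Sfib_def)
  also have "\<dots> = (\<Sum>h'\<in>all_pairs n. card (Sfib k n e h))"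
    using card_Sfib_eq[OF assms(1,4)] by simp
  also have "\<dots> = card (Sfib k n e h) * (n choose 2)"
    by (simp add: card_all_pairs)
  finally show ?thesis using card_Inj[OF assms(3)] by (metis of_nat_mult)
qed

definition Bset :: "nat \<Rightarrow> nat set set \<Rightarrow> nat \<Rightarrow> nat set \<Rightarrow> (nat \<Rightarrow> nat) set" where
  "Bset k EF n h = {\<phi> \<in> {1..k} \<rightarrow>\<^sub>E {1..n}. inj_on \<phi> {1..k} \<and> (\<exists>e\<in>EF. \<phi> ` e = h)}"

lemma card_EF:
  assumes "simple_graph_on {1..k} EF"
  shows "card EF \<le> k choose 2" "finite EF"
proof -
  have S: "EF \<subseteq> {B. B \<subseteq> {1..k} \<and> card B = 2}" using assms by (auto simp: simple_graph_on_def)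
  have F: "finite {B. B \<subseteq> {1..k} \<and> card B = 2}" by (rule finite_subset[of _ "Pow {1..k}"]) auto
  show "finite EF" using finite_subset[OF S F] .
  have "card EF \<le> card {B. B \<subseteq> {1..k} \<and> card B = 2}" by (rule card_mono[OF F S])
  also have "\<dots> = k choose 2" using n_subsets[of "{1..k}" 2] by simp
  finally show "card EF \<le> k choose 2" .
qed

lemma card_Bset:
  assumes "simple_graph_on {1..k} EF" "k \<le> n" "2 \<le> n" "h \<in> all_pairs n"
  shows "real (card (Bset k EF n h)) \<le> real k * (real k - 1) / (real n * (real n - 1)) * falling n k"
proof -
  have fin: "finite EF" using card_EF[OF assms(1)] by simp
  have "Bset k EF n h = (\<Union>e\<in>EF. Sfib k n e h)" by (auto simp: Bset_def Sfib_def)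
  then have "card (Bset k EF n h) \<le> (\<Sum>e\<in>EF. card (Sfib k n e h))"
    by (simp only:) (rule card_UN_le[OF fin])
  then have "real (card (Bset k EF n h)) \<le> (\<Sum>e\<in>EF. real (card (Sfib k n e h)))"
    by (metis of_nat_le_iff of_nat_sum)
  also have "\<dots> = (\<Sum>e\<in>EF. falling n k / real (n choose 2))"
  proof (rule sum.cong[OF refl])
    fix e assume "e \<in> EF"
    then have "e \<subseteq> {1..k}" "card e = 2" using assms(1) by (auto simp: simple_graph_on_def)
    moreover have "real (n choose 2) > 0" using assms(3) by simp
    ultimately show "real (card (Sfib k n e h)) = falling n k / real (n choose 2)"
      using card_Sfib[OF _ _ assms(2,4)] by (simp add: field_simps)
  qed
  also have "\<dots> = real (card EF) * falling n k / real (n choose 2)" by simp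
  also have "\<dots> \<le> real (k choose 2) * falling n k / real (n choose 2)"
  proof -
    have "falling n k \<ge> 0" using card_Inj[OF assms(2)] by (metis of_nat_0_le_iff)
    then show ?thesis using card_EF[OF assms(1)]
      by (intro divide_right_mono mult_right_mono) auto
  qed
  also have "\<dots> = real k * (real k - 1) / (real n * (real n - 1)) * falling n k"
    using assms(3) by (simp add: real_choose_two field_simps)
  finally show ?thesis .
qed



lemma expectation_bind_finite:
  fixes f :: "'b \<Rightarrow> real"
  assumes M: "finite (set_pmf M)" and N: "\<And>x. x \<in> set_pmf M \<Longrightarrow> finite (set_pmf (N x))"
  shows "measure_pmf.expectation (bind_pmf M N) f =
         measure_pmf.expectation M (\<lambda>x. measure_pmf.expectation (N x) f)"
proof -
  define S where "S = (\<Union>x\<in>set_pmf M. set_pmf (N x))"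
  have S: "finite S" using M N by (auto simp: S_def)
  have pb: "pmf (bind_pmf M N) z = (\<Sum>x\<in>set_pmf M. pmf (N x) z * pmf M x)" for z
    unfolding pmf_bind by (rule integral_measure_pmf_real[OF M]) auto
  have "measure_pmf.expectation (bind_pmf M N) f = (\<Sum>z\<in>S. f z * pmf (bind_pmf M N) z)"
    by (rule integral_measure_pmf_real[OF S]) (auto simp: S_def)
  also have "\<dots> = (\<Sum>x\<in>set_pmf M. (\<Sum>z\<in>S. f z * pmf (N x) z) * pmf M x)"
    unfolding pb by (simp add: sum_distrib_left sum_distrib_right mult.assoc sum.swap[of _ S])
  also have "\<dots> = (\<Sum>x\<in>set_pmf M. measure_pmf.expectation (N x) f * pmf M x)"
  proof (rule sum.cong[OF refl])
    fix x assume x: "x \<in> set_pmf M"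
    have "measure_pmf.expectation (N x) f = (\<Sum>z\<in>S. f z * pmf (N x) z)"
      by (rule integral_measure_pmf_real[OF S]) (use x in \<open>auto simp: S_def\<close>)
    then show "(\<Sum>z\<in>S. f z * pmf (N x) z) * pmf M x = measure_pmf.expectation (N x) f * pmf M x"
      by simp
  qed
  also have "\<dots> = measure_pmf.expectation M (\<lambda>x. measure_pmf.expectation (N x) f)"
    by (rule integral_measure_pmf_real[OF M, symmetric]) auto
  finally show ?thesis .
qed

lemma finite_set_Pi_pmf_bool:
  fixes q :: "'a \<Rightarrow> bool pmf"
  assumes "finite A"
  shows "finite (set_pmf (Pi_pmf A d q))"
  using assms by (simp add: set_Pi_pmf finite_PiE_dflt)

lemma Pi_pmf_insert_bind:
  assumes "finite A" "a \<notin> A"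
  shows "Pi_pmf (insert a A) d q = bind_pmf (q a) (\<lambda>y. map_pmf (\<lambda>g. g(a:=y)) (Pi_pmf A d q))"
  using Pi_pmf_insert'[OF assms] by (simp add: map_pmf_def)

lemma mcd_mgf:
  fixes f :: "('a \<Rightarrow> bool) \<Rightarrow> real" and q :: "'a \<Rightarrow> bool pmf"
  assumes "finite A" "l > 0"
    and "\<And>g a y. a \<in> A \<Longrightarrow> \<bar>f (g(a:=y)) - f g\<bar> \<le> c a"
  shows "(\<integral>\<^sup>+g. ennreal (exp (l * (f g - measure_pmf.expectation (Pi_pmf A d q) f))) \<partial>Pi_pmf A d q)
          \<le> ennreal (exp (l\<^sup>2 * (\<Sum>a\<in>A. (c a)\<^sup>2) / 8))"
  using assms(1,3)
proof (induction A arbitrary: f rule: finite_induct)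
  case empty
  then show ?case by simp
next
  case (insert a A f)
  define fy where "fy y = (\<lambda>g. f (g(a:=y)))" for y
  define h where "h y = measure_pmf.expectation (Pi_pmf A d q) (fy y)" for y
  define E where "E = measure_pmf.expectation (Pi_pmf (insert a A) d q) f"
  have finA: "finite (set_pmf (Pi_pmf A d q))" using insert by (simp add: finite_set_Pi_pmf_bool)
  have finq: "finite (set_pmf (q a))" by simp
  have E: "E = measure_pmf.expectation (q a) h"
    unfolding E_def h_def fy_def Pi_pmf_insert_bind[OF insert(1,2)]
    by (subst expectation_bind_finite) (use finA in auto)
  have bd: "\<bar>fy y (g(b:=z)) - fy y g\<bar> \<le> c b" if "b \<in> A" for y g b z
  proof -
    have "a \<noteq> b" using that insert by auto
    then have "g(b:=z, a:=y) = (g(a:=y))(b:=z)" by (auto simp: fun_eq_iff)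
    then have "fy y (g(b:=z)) = f ((g(a:=y))(b:=z))" "fy y g = f (g(a:=y))" by (simp_all only: fy_def)
    then show ?thesis by (simp only:) (rule insert(4), use that in simp)
  qed
  have IH: "(\<integral>\<^sup>+g. ennreal (exp (l * (fy y g - h y))) \<partial>Pi_pmf A d q)
          \<le> ennreal (exp (l\<^sup>2 * (\<Sum>a\<in>A. (c a)\<^sup>2) / 8))" for y
    unfolding h_def by (rule insert(3), rule bd)
  define lo where "lo = min (h False) (h True)"
  define hi where "hi = max (h False) (h True)"
  have hdiff: "\<bar>h True - h False\<bar> \<le> c a"
  proof -
    have "h True - h False = measure_pmf.expectation (Pi_pmf A d q) (\<lambda>g. fy True g - fy False g)"
      unfolding h_def by (rule Bochner_Integration.integral_diff[symmetric])
        (auto intro: integrable_measure_pmf_finite[OF finA])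
    also have "\<bar>\<dots>\<bar> \<le> measure_pmf.expectation (Pi_pmf A d q) (\<lambda>g. c a)"
    proof -
      have "\<bar>fy True g - fy False g\<bar> \<le> c a" for g
      proof -
        have "fy True g = f ((g(a:=False))(a:=True))" "fy False g = f (g(a:=False))"
          by (simp_all only: fy_def fun_upd_upd)
        then show ?thesis by (simp only:) (rule insert(4), simp)
      qed
      then show ?thesis
        by (intro order.trans[OF integral_abs_bound] integral_mono)
          (auto intro: integrable_measure_pmf_finite[OF finA])
    qed
    finally show ?thesis by simp
  qed
  have hilo: "hi - lo \<ge> 0" "hi - lo \<le> c a" using hdiff by (auto simp: hi_def lo_def)
  interpret H: interval_bounded_random_variable "measure_pmf (q a)" h lo hi
  proof unfold_locales
    have "h y \<in> {lo..hi}" for y by (cases y) (auto simp: lo_def hi_def)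
    then show "AE x in measure_pmf (q a). h x \<in> {lo..hi}" by (intro AE_I2)
  qed auto
  have Hoe: "(\<integral>\<^sup>+y. ennreal (exp (l * (h y - E))) \<partial>q a) \<le> ennreal (exp (l\<^sup>2 * (c a)\<^sup>2 / 8))"
  proof -
    have "(\<integral>\<^sup>+y. ennreal (exp (l * (h y - E))) \<partial>q a) \<le> ennreal (exp (l\<^sup>2 * (hi - lo)\<^sup>2 / 8))"
      using H.Hoeffdings_lemma_nn_integral[OF assms(2)] E by simp
    also have "\<dots> \<le> ennreal (exp (l\<^sup>2 * (c a)\<^sup>2 / 8))"
      using hilo by (intro ennreal_leI) (auto intro!: mult_left_mono power_mono divide_right_mono)
    finally show ?thesis .
  qed
  have "(\<integral>\<^sup>+g. ennreal (exp (l * (f g - E))) \<partial>Pi_pmf (insert a A) d q)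
      = (\<integral>\<^sup>+y. (\<integral>\<^sup>+g. ennreal (exp (l * (fy y g - h y))) * ennreal (exp (l * (h y - E))) \<partial>Pi_pmf A d q) \<partial>q a)"
    unfolding Pi_pmf_insert_bind[OF insert(1,2)]
    by (simp add: fy_def ennreal_mult'[symmetric] exp_add[symmetric] algebra_simps)
  also have "\<dots> = (\<integral>\<^sup>+y. (\<integral>\<^sup>+g. ennreal (exp (l * (fy y g - h y))) \<partial>Pi_pmf A d q) * ennreal (exp (l * (h y - E))) \<partial>q a)"
    by (simp add: nn_integral_multc)
  also have "\<dots> \<le> (\<integral>\<^sup>+y. ennreal (exp (l\<^sup>2 * (\<Sum>a\<in>A. (c a)\<^sup>2) / 8)) * ennreal (exp (l * (h y - E))) \<partial>q a)"
    by (intro nn_integral_mono mult_right_mono IH) auto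
  also have "\<dots> = ennreal (exp (l\<^sup>2 * (\<Sum>a\<in>A. (c a)\<^sup>2) / 8)) * (\<integral>\<^sup>+y. ennreal (exp (l * (h y - E))) \<partial>q a)"
    by (simp add: nn_integral_cmult)
  also have "\<dots> \<le> ennreal (exp (l\<^sup>2 * (\<Sum>a\<in>A. (c a)\<^sup>2) / 8)) * ennreal (exp (l\<^sup>2 * (c a)\<^sup>2 / 8))"
    by (intro mult_left_mono Hoe) auto
  also have "\<dots> = ennreal (exp (l\<^sup>2 * (\<Sum>a\<in>insert a A. (c a)\<^sup>2) / 8))"
    using insert by (simp add: ennreal_mult'[symmetric] exp_add[symmetric] add_divide_distrib algebra_simps)
  finally show ?case unfolding E_def .
qed

lemma mcd_tail:
  fixes f :: "('a \<Rightarrow> bool) \<Rightarrow> real" and q :: "'a \<Rightarrow> bool pmf"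
  assumes "finite A" "t > 0" "S > 0" "S = (\<Sum>a\<in>A. (c a)\<^sup>2)"
    and "\<And>g a y. a \<in> A \<Longrightarrow> \<bar>f (g(a:=y)) - f g\<bar> \<le> c a"
  shows "measure_pmf.prob (Pi_pmf A d q) {g. f g - measure_pmf.expectation (Pi_pmf A d q) f \<ge> t}
          \<le> exp (- 2 * t\<^sup>2 / S)"
proof -
  define M where "M = Pi_pmf A d q"
  define E where "E = measure_pmf.expectation M f"
  define l where "l = 4 * t / S"
  have l: "l > 0" using assms by (simp add: l_def)
  have mgf: "(\<integral>\<^sup>+g. ennreal (exp (l * (f g - E))) \<partial>M) \<le> ennreal (exp (l\<^sup>2 * S / 8))"
    unfolding M_def E_def assms(4) by (rule mcd_mgf[OF assms(1) l assms(5)])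
  have "emeasure M {g. f g - E \<ge> t} = (\<integral>\<^sup>+g. indicator {g. f g - E \<ge> t} g \<partial>M)"
    by simp
  also have "\<dots> \<le> (\<integral>\<^sup>+g. ennreal (exp (- (l * t))) * ennreal (exp (l * (f g - E))) \<partial>M)"
  proof (intro nn_integral_mono)
    fix g
    show "indicator {g. f g - E \<ge> t} g \<le> ennreal (exp (- (l * t))) * ennreal (exp (l * (f g - E)))"
    proof (cases "f g - E \<ge> t")
      case True
      then have "l * t \<le> l * (f g - E)" using l by (intro mult_left_mono) auto
      then have "1 \<le> exp (- (l * t)) * exp (l * (f g - E))"
        by (simp add: exp_add[symmetric])
      then show ?thesis using True by (simp add: ennreal_mult'[symmetric])
    qed auto
  qed
  also have "\<dots> = ennreal (exp (- (l * t))) * (\<integral>\<^sup>+g. ennreal (exp (l * (f g - E))) \<partial>M)"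
    by (simp add: nn_integral_cmult)
  also have "\<dots> \<le> ennreal (exp (- (l * t))) * ennreal (exp (l\<^sup>2 * S / 8))"
    by (intro mult_left_mono mgf) auto
  also have "\<dots> = ennreal (exp (- 2 * t\<^sup>2 / S))"
  proof -
    have "- (l * t) + l\<^sup>2 * S / 8 = - 2 * t\<^sup>2 / S"
      using assms(3) by (simp add: l_def power2_eq_square field_simps)
    then show ?thesis by (simp add: ennreal_mult'[symmetric] exp_add[symmetric])
  qed
  finally have "emeasure M {g. f g - E \<ge> t} \<le> ennreal (exp (- 2 * t\<^sup>2 / S))" .
  then show ?thesis unfolding M_def[symmetric] E_def[symmetric]
    by (simp add: measure_pmf.emeasure_eq_measure)
qed

lemma mcd_abs:
  fixes f :: "('a \<Rightarrow> bool) \<Rightarrow> real" and q :: "'a \<Rightarrow> bool pmf"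
  assumes "finite A" "t > 0" "S > 0" "S = (\<Sum>a\<in>A. (c a)\<^sup>2)"
    and "\<And>g a y. a \<in> A \<Longrightarrow> \<bar>f (g(a:=y)) - f g\<bar> \<le> c a"
  shows "measure_pmf.prob (Pi_pmf A d q) {g. \<bar>f g - measure_pmf.expectation (Pi_pmf A d q) f\<bar> \<ge> t}
          \<le> 2 * exp (- 2 * t\<^sup>2 / S)"
proof -
  define M where "M = Pi_pmf A d q"
  define E where "E = measure_pmf.expectation M f"
  have neg: "measure_pmf.expectation M (\<lambda>g. - f g) = - E" unfolding E_def by simp
  have bd2: "\<bar>- f (g(a:=y)) - - f g\<bar> \<le> c a" if "a \<in> A" for g a y
    using assms(5)[OF that, of g y] by linarith
  have 1: "measure_pmf.prob M {g. f g - E \<ge> t} \<le> exp (- 2 * t\<^sup>2 / S)"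
    unfolding M_def E_def by (rule mcd_tail[OF assms])
  have 2: "measure_pmf.prob M {g. - f g - (- E) \<ge> t} \<le> exp (- 2 * t\<^sup>2 / S)"
    unfolding neg[symmetric] unfolding M_def by (rule mcd_tail[OF assms(1-4) bd2])
  have "{g. \<bar>f g - E\<bar> \<ge> t} \<subseteq> {g. f g - E \<ge> t} \<union> {g. - f g - (- E) \<ge> t}" by auto
  then have "measure_pmf.prob M {g. \<bar>f g - E\<bar> \<ge> t}
      \<le> measure_pmf.prob M ({g. f g - E \<ge> t} \<union> {g. - f g - (- E) \<ge> t})"
    by (intro measure_pmf.finite_measure_mono) auto
  also have "\<dots> \<le> measure_pmf.prob M {g. f g - E \<ge> t} + measure_pmf.prob M {g. - f g - (- E) \<ge> t}"
    by (rule measure_Un_le) auto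
  finally show ?thesis using 1 2 unfolding M_def[symmetric] E_def[symmetric] by linarith
qed



lemma card_diff_le:
  assumes "finite S1" "finite S2" "finite B" "S1 - B = S2 - B"
  shows "\<bar>real (card S1) - real (card S2)\<bar> \<le> real (card B)"
proof -
  have c1: "card (S1 - B) = card S1 - card (S1 \<inter> B)" "card (S1 \<inter> B) \<le> card S1"
    using assms(1) by (auto intro!: card_Diff_subset_Int card_mono)
  have c2: "card (S2 - B) = card S2 - card (S2 \<inter> B)" "card (S2 \<inter> B) \<le> card S2"
    using assms(2) by (auto intro!: card_Diff_subset_Int card_mono)
  have b: "card (S1 \<inter> B) \<le> card B" "card (S2 \<inter> B) \<le> card B"
    using assms by (auto intro: card_mono)
  have eq: "card (S1 - B) = card (S2 - B)" using assms(4) by simp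
  show ?thesis using c1 c2 b eq by arith
qed

lemma prod_01:
  assumes "finite A"
  shows "(\<Prod>b\<in>A. (if P b then 1 else 0 :: real)) = (if \<forall>b\<in>A. P b then 1 else 0)"
  using assms by (induction A rule: finite_induct) auto

lemma falling_pos: "k \<le> n \<Longrightarrow> falling n k > 0"
  unfolding falling_def by (intro prod_pos) auto

lemma edge_val_01:
  assumes "standard_kernel \<kappa>" "\<forall>i\<in>{1..n}. x i \<in> {0..1}" "b \<in> all_pairs n"
  shows "0 \<le> edge_val \<kappa> x b" "edge_val \<kappa> x b \<le> 1"
proof -
  have b: "b \<subseteq> {1..n}" "card b = 2" using assms(3) by (auto simp: all_pairs_def)
  then have "finite b" "b \<noteq> {}" by (auto intro: finite_subset)
  then have "Min b \<in> b" "Max b \<in> b" by auto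
  then have "x (Min b) \<in> {0..1}" "x (Max b) \<in> {0..1}" using b assms(2) by auto
  then show "0 \<le> edge_val \<kappa> x b" "edge_val \<kappa> x b \<le> 1"
    using assms(1) unfolding standard_kernel_def edge_val_def by auto
qed

lemma edge_val_comp:
  assumes "standard_kernel \<kappa>" "\<forall>i\<in>{1..n}. x i \<in> {0..1}"
    and "e \<subseteq> {1..k}" "card e = 2" "\<phi> ` {1..k} \<subseteq> {1..n}" "inj_on \<phi> {1..k}"
  shows "edge_val \<kappa> (x \<circ> \<phi>) e = edge_val \<kappa> x (\<phi> ` e)"
proof -
  obtain i j where ij: "e = {i, j}" "i < j"
    using assms(4) by (auto simp: card_2_iff) (metis insert_commute linorder_neqE_nat)
  have ijk: "i \<in> {1..k}" "j \<in> {1..k}" using ij assms(3) by auto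
  have ne: "\<phi> i \<noteq> \<phi> j" using ij ijk assms(6) by (auto dest: inj_onD)
  have "\<phi> i \<in> {1..n}" "\<phi> j \<in> {1..n}" using ijk assms(5) by blast+
  then have xin: "x (\<phi> i) \<in> {0..1}" "x (\<phi> j) \<in> {0..1}" using assms(2) by blast+
  have sym: "\<kappa> (x (\<phi> i)) (x (\<phi> j)) = \<kappa> (x (\<phi> j)) (x (\<phi> i))"
    using xin assms(1) unfolding standard_kernel_def by auto
  have "edge_val \<kappa> (x \<circ> \<phi>) e = \<kappa> (x (\<phi> i)) (x (\<phi> j))"
    using ij by (simp add: edge_val_def)
  also have "\<dots> = edge_val \<kappa> x (\<phi> ` e)"
    using ij ne sym by (cases "\<phi> i < \<phi> j") (auto simp: edge_val_def min_def max_def)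
  finally show ?thesis .
qed



theorem lemma1:
  fixes \<kappa> :: "real \<Rightarrow> real \<Rightarrow> real" and k n m :: nat and EF EH :: "nat set set"
    and x :: "nat \<Rightarrow> real" and \<epsilon> :: real
  assumes "standard_kernel \<kappa>"
    and "simple_graph_on {1..k} EF"
    and "simple_graph_on {1..n} EH"
    and "card EH = m"
    and "k \<le> n" and "2 \<le> n"
    and "\<forall>i\<in>{1..n}. x i \<in> {0..1}"
    and "\<epsilon> > real m * (real k * (real k - 1) / (real n * (real n - 1)))"
  shows "measure_pmf.prob (random_graph n x EH \<kappa>)
           {G. \<bar>hom_density k EF n G - mu_F \<kappa> k EF n x\<bar> > \<epsilon>}
         \<le> 2 * exp (- (2 * (\<epsilon> - real m * (real k * (real k - 1) / (real n * (real n - 1))))\<^sup>2)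
                 / ((real (n choose 2) - real m) * (real k * (real k - 1) / (real n * (real n - 1)))\<^sup>2))"
proof -
  define cc where "cc = real k * (real k - 1) / (real n * (real n - 1))"
  define AP where "AP = all_pairs n"
  define A where "A = AP - EH"
  define p where "p = edge_val \<kappa> x"
  define q where "q = (\<lambda>e. bernoulli_pmf (p e))"
  define \<Phi> where "\<Phi> = (\<lambda>c. EH \<union> {e \<in> A. c e})"
  define M where "M = Pi_pmf A False q"
  define \<mu> where "\<mu> = mu_F \<kappa> k EF n x"
  define F where "F = (\<lambda>c. hom_density k EF n (\<Phi> c))"
  define Inj where "Inj = {f \<in> {1..k} \<rightarrow>\<^sub>E {1..n}. inj_on f {1..k}}"
  define N where "N = real (n choose 2) - real m"
  define t where "t = \<epsilon> - real m * cc"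
  have tpos: "t > 0" using assms(8) by (simp add: t_def cc_def)
  have EHAP: "EH \<subseteq> AP" using assms(3) by (auto simp: simple_graph_on_def AP_def all_pairs_def)
  have finAP: "finite AP" by (simp add: AP_def finite_all_pairs)
  have finA: "finite A" using finAP by (simp add: A_def)
  have finEH: "finite EH" using finAP EHAP finite_subset by blast
  have mle: "m \<le> n choose 2" using card_mono[OF finAP EHAP] assms(4) by (simp add: AP_def card_all_pairs)
  have cardA: "real (card A) = N"
    unfolding A_def N_def using EHAP finEH mle
    by (simp add: card_Diff_subset of_nat_diff card_all_pairs AP_def assms(4))
  have RG: "random_graph n x EH \<kappa> = map_pmf \<Phi> M"
    unfolding random_graph_def \<Phi>_def M_def q_def p_def A_def AP_def by simp
  have fpos: "falling n k > 0" by (rule falling_pos[OF assms(5)])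
  have p01: "0 \<le> p b" "p b \<le> 1" if "b \<in> AP" for b
    using edge_val_01[OF assms(1,7)] that by (auto simp: p_def AP_def)
  have injhom: "inj_hom k EF n G = {\<phi> \<in> Inj. \<forall>e\<in>EF. \<phi> ` e \<in> G}" for G
    unfolding inj_hom_def Inj_def by auto
  have finInj: "finite Inj" unfolding Inj_def by (rule finite_Inj)
  have EFe: "e \<subseteq> {1..k}" "card e = 2" if "e \<in> EF" for e
    using assms(2) that by (auto simp: simple_graph_on_def)
  have Injp: "\<phi> ` {1..k} \<subseteq> {1..n}" "inj_on \<phi> {1..k}" if "\<phi> \<in> Inj" for \<phi>
    using that PiE_mem unfolding Inj_def by blast+
  have phiAP: "\<phi> ` e \<in> AP" if "\<phi> \<in> Inj" "e \<in> EF" for \<phi> e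
  proof -
    have "\<phi> ` e \<subseteq> {1..n}" using Injp(1)[OF that(1)] EFe[OF that(2)] by blast
    moreover have "card (\<phi> ` e) = 2"
      using EFe[OF that(2)] Injp(2)[OF that(1)] by (subst card_image) (auto intro: inj_on_subset)
    ultimately show ?thesis by (simp add: AP_def all_pairs_def)
  qed
  have Bbound: "real (card (Bset k EF n h)) \<le> cc * falling n k" if "h \<in> AP" for h
    using card_Bset[OF assms(2,5,6)] that by (simp add: cc_def AP_def)
  have Bsub: "Bset k EF n h = {\<phi> \<in> Inj. \<exists>e\<in>EF. \<phi> ` e = h}" for h
    by (auto simp: Bset_def Inj_def)
  have finB: "finite (Bset k EF n h)" for h
    unfolding Bsub by (rule finite_subset[OF _ finInj]) auto

  have bd: "\<bar>F (g(a:=y)) - F g\<bar> \<le> cc" if "a \<in> A" for g a y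
  proof -
    define S1 where "S1 = inj_hom k EF n (\<Phi> (g(a:=y)))"
    define S2 where "S2 = inj_hom k EF n (\<Phi> g)"
    have "S1 - Bset k EF n a = S2 - Bset k EF n a"
    proof -
      have eqv: "\<phi> ` e \<in> \<Phi> (g(a:=y)) \<longleftrightarrow> \<phi> ` e \<in> \<Phi> g" if "\<phi> ` e \<noteq> a" for \<phi> e
        using that by (auto simp: \<Phi>_def)
      have key: "(\<forall>e\<in>EF. \<phi> ` e \<in> \<Phi> (g(a:=y))) \<longleftrightarrow> (\<forall>e\<in>EF. \<phi> ` e \<in> \<Phi> g)"
        if "\<not> (\<exists>e\<in>EF. \<phi> ` e = a)" for \<phi>
      proof (rule ball_cong[OF refl])
        fix e assume "e \<in> EF"
        with that have "\<phi> ` e \<noteq> a" by blast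
        then show "\<phi> ` e \<in> \<Phi> (g(a:=y)) \<longleftrightarrow> \<phi> ` e \<in> \<Phi> g" by (rule eqv)
      qed
      show ?thesis
      proof (rule set_eqI)
        fix \<phi>
        have 1: "\<phi> \<in> S1 - Bset k EF n a \<longleftrightarrow> \<phi> \<in> Inj \<and> (\<forall>e\<in>EF. \<phi> ` e \<in> \<Phi> (g(a:=y))) \<and> \<not> (\<exists>e\<in>EF. \<phi> ` e = a)"
          unfolding S1_def injhom Bsub by blast
        have 2: "\<phi> \<in> S2 - Bset k EF n a \<longleftrightarrow> \<phi> \<in> Inj \<and> (\<forall>e\<in>EF. \<phi> ` e \<in> \<Phi> g) \<and> \<not> (\<exists>e\<in>EF. \<phi> ` e = a)"
          unfolding S2_def injhom Bsub by blast
        show "\<phi> \<in> S1 - Bset k EF n a \<longleftrightarrow> \<phi> \<in> S2 - Bset k EF n a"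
          unfolding 1 2 using key[of \<phi>] by blast
      qed
    qed
    then have "\<bar>real (card S1) - real (card S2)\<bar> \<le> real (card (Bset k EF n a))"
      by (intro card_diff_le finB) (auto simp: S1_def S2_def injhom intro: finite_subset[OF _ finInj])
    also have "\<dots> \<le> cc * falling n k" using Bbound that by (auto simp: A_def)
    finally have le: "\<bar>real (card S1) - real (card S2)\<bar> \<le> cc * falling n k" .
    have "F (g(a:=y)) - F g = (real (card S1) - real (card S2)) / falling n k"
      by (simp add: F_def hom_density_def S1_def S2_def diff_divide_distrib)
    then have "\<bar>F (g(a:=y)) - F g\<bar> = \<bar>real (card S1) - real (card S2)\<bar> / falling n k"
      using fpos by simp
    also have "\<dots> \<le> cc" using le fpos by (simp add: pos_divide_le_eq)
    finally show ?thesis .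
  qed

  have EFbound: "\<bar>measure_pmf.expectation M F - \<mu>\<bar> \<le> real m * cc"
  proof -
    define ind where "ind \<phi> c = (if \<forall>e\<in>EF. \<phi> ` e \<in> \<Phi> c then 1 else 0 :: real)" for \<phi> c
    define D where "D \<phi> = (\<lambda>e. \<phi> ` e) ` EF" for \<phi> :: "nat \<Rightarrow> nat"
    define U where "U = (\<Union>h\<in>EH. Bset k EF n h)"
    define T where "T \<phi> = T_F \<kappa> EF (x \<circ> \<phi>)" for \<phi>
    have finEF: "finite EF" using card_EF[OF assms(2)] by simp
    have finM: "finite (set_pmf M)" unfolding M_def by (rule finite_set_Pi_pmf_bool[OF finA])
    have cardsum: "real (card (inj_hom k EF n (\<Phi> c))) = (\<Sum>\<phi>\<in>Inj. ind \<phi> c)" for c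
      unfolding injhom ind_def using sum.inter_filter[OF finInj, of "\<lambda>_. 1::real"] by simp
    have EF: "measure_pmf.expectation M F = (\<Sum>\<phi>\<in>Inj. measure_pmf.expectation M (ind \<phi>)) / falling n k"
    proof -
      have "measure_pmf.expectation M F = measure_pmf.expectation M (\<lambda>c. (\<Sum>\<phi>\<in>Inj. ind \<phi> c) / falling n k)"
        unfolding F_def hom_density_def cardsum ..
      also have "\<dots> = measure_pmf.expectation M (\<lambda>c. (\<Sum>\<phi>\<in>Inj. ind \<phi> c)) / falling n k"
        by (rule integral_divide_zero)
      also have "measure_pmf.expectation M (\<lambda>c. (\<Sum>\<phi>\<in>Inj. ind \<phi> c)) = (\<Sum>\<phi>\<in>Inj. measure_pmf.expectation M (ind \<phi>))"
        by (rule Bochner_Integration.integral_sum) (rule integrable_measure_pmf_finite[OF finM])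
      finally show ?thesis .
    qed
    have mu: "\<mu> = (\<Sum>\<phi>\<in>Inj. T \<phi>) / falling n k"
      unfolding \<mu>_def mu_F_def T_def Inj_def ..
    have DAP: "D \<phi> \<subseteq> AP" if "\<phi> \<in> Inj" for \<phi> using phiAP[OF that] by (auto simp: D_def)
    have finD: "finite (D \<phi>)" for \<phi> using finEF by (simp add: D_def)
    have Eind: "measure_pmf.expectation M (ind \<phi>) = (\<Prod>b\<in>A \<inter> D \<phi>. p b)" if \<phi>: "\<phi> \<in> Inj" for \<phi>
    proof -
      define f where "f b v = (if b \<in> D \<phi> then (if v then 1 else 0) else 1 :: real)" for b v
      have indeq: "ind \<phi> = (\<lambda>c. \<Prod>b\<in>A. f b (c b))"
      proof (rule ext)
        fix c
        have "(\<Prod>b\<in>A. f b (c b)) = (\<Prod>b\<in>A. (if (b \<in> D \<phi> \<longrightarrow> c b) then 1 else 0))"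
          by (intro prod.cong) (auto simp: f_def)
        also have "\<dots> = (if \<forall>b\<in>A. (b \<in> D \<phi> \<longrightarrow> c b) then 1 else 0)" by (rule prod_01[OF finA])
        also have "(\<forall>b\<in>A. (b \<in> D \<phi> \<longrightarrow> c b)) \<longleftrightarrow> (\<forall>e\<in>EF. \<phi> ` e \<in> \<Phi> c)"
          using phiAP[OF \<phi>] by (auto simp: A_def D_def \<Phi>_def)
        finally show "ind \<phi> c = (\<Prod>b\<in>A. f b (c b))" by (simp add: ind_def)
      qed
      have "measure_pmf.expectation M (ind \<phi>) = measure_pmf.expectation M (\<lambda>c. \<Prod>b\<in>A. f b (c b))"
        by (simp only: indeq)
      also have "\<dots> = (\<Prod>b\<in>A. measure_pmf.expectation (q b) (f b))"
        unfolding M_def by (rule expectation_prod_Pi_pmf[OF finA])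
          (auto simp: f_def intro: integrable_measure_pmf_finite)
      also have "\<dots> = (\<Prod>b\<in>A. if b \<in> D \<phi> then p b else 1)"
      proof (rule prod.cong[OF refl])
        fix b assume "b \<in> A"
        then have "0 \<le> p b" "p b \<le> 1" using p01 by (auto simp: A_def)
        then show "measure_pmf.expectation (q b) (f b) = (if b \<in> D \<phi> then p b else 1)"
          by (simp add: q_def f_def)
      qed
      also have "\<dots> = (\<Prod>b\<in>A \<inter> D \<phi>. p b)"
        using prod.inter_filter[OF finA, of p "\<lambda>b. b \<in> D \<phi>"] by (simp add: Int_def)
      finally show ?thesis .
    qed
    have Tphi: "T \<phi> = (\<Prod>b\<in>D \<phi>. p b)" if \<phi>: "\<phi> \<in> Inj" for \<phi>
    proof -
      have "T \<phi> = (\<Prod>e\<in>EF. p (\<phi> ` e))"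
        unfolding T_def T_F_def p_def
      proof (rule prod.cong[OF refl])
        fix e assume e: "e \<in> EF"
        show "edge_val \<kappa> (x \<circ> \<phi>) e = edge_val \<kappa> x (\<phi> ` e)"
          by (rule edge_val_comp[OF assms(1,7) EFe[OF e] Injp[OF \<phi>]])
      qed
      also have "\<dots> = (\<Prod>b\<in>D \<phi>. p b)"
      proof -
        have "inj_on (image \<phi>) (Pow {1..k})" by (rule inj_on_image_Pow[OF Injp(2)[OF \<phi>]])
        then have "inj_on (image \<phi>) EF" by (rule inj_on_subset) (use EFe in auto)
        then show ?thesis unfolding D_def by (simp add: prod.reindex)
      qed
      finally show ?thesis .
    qed
    have perphi: "\<bar>measure_pmf.expectation M (ind \<phi>) - T \<phi>\<bar> \<le> (if \<phi> \<in> U then 1 else 0)"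
      if \<phi>: "\<phi> \<in> Inj" for \<phi>
    proof (cases "\<phi> \<in> U")
      case False
      have "D \<phi> \<inter> EH = {}"
      proof (rule ccontr)
        assume "D \<phi> \<inter> EH \<noteq> {}"
        then obtain e where "e \<in> EF" "\<phi> ` e \<in> EH" by (auto simp: D_def)
        then have "\<phi> \<in> Bset k EF n (\<phi> ` e)" using \<phi> unfolding Bsub by blast
        then show False using False \<open>\<phi> ` e \<in> EH\<close> by (auto simp: U_def)
      qed
      then have "A \<inter> D \<phi> = D \<phi>" using DAP[OF \<phi>] by (auto simp: A_def)
      then show ?thesis using Eind[OF \<phi>] Tphi[OF \<phi>] False by simp
    next
      case True
      have "0 \<le> (\<Prod>b\<in>A \<inter> D \<phi>. p b)" "(\<Prod>b\<in>A \<inter> D \<phi>. p b) \<le> 1"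
        using p01 by (auto simp: A_def intro!: prod_nonneg prod_le_1)
      moreover have "0 \<le> (\<Prod>b\<in>D \<phi>. p b)" "(\<Prod>b\<in>D \<phi>. p b) \<le> 1"
        using p01 DAP[OF \<phi>] by (auto intro!: prod_nonneg prod_le_1)
      ultimately show ?thesis using Eind[OF \<phi>] Tphi[OF \<phi>] True by simp
    qed
    have "\<bar>measure_pmf.expectation M F - \<mu>\<bar> = \<bar>\<Sum>\<phi>\<in>Inj. measure_pmf.expectation M (ind \<phi>) - T \<phi>\<bar> / falling n k"
      unfolding EF mu using fpos by (simp add: diff_divide_distrib[symmetric] sum_subtractf)
    also have "\<dots> \<le> (\<Sum>\<phi>\<in>Inj. (if \<phi> \<in> U then 1 else 0)) / falling n k"
      using fpos by (intro divide_right_mono order.trans[OF sum_abs] sum_mono perphi) auto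
    also have "(\<Sum>\<phi>\<in>Inj. (if \<phi> \<in> U then 1 else 0 :: real)) = real (card (Inj \<inter> U))"
      using sum.inter_filter[OF finInj, of "\<lambda>_. 1::real" "\<lambda>\<phi>. \<phi> \<in> U"] by (simp add: Int_def)
    also have "card (Inj \<inter> U) \<le> card U"
      using finB finEH by (intro card_mono) (auto simp: U_def)
    also have "card U \<le> (\<Sum>h\<in>EH. card (Bset k EF n h))"
      unfolding U_def by (rule card_UN_le[OF finEH])
    also have "real (\<Sum>h\<in>EH. card (Bset k EF n h)) \<le> (\<Sum>h\<in>EH. cc * falling n k)"
      unfolding of_nat_sum by (intro sum_mono Bbound) (use EHAP in auto)
    also have "\<dots> / falling n k = real m * cc"
      using fpos assms(4) by simp
    finally show ?thesis using fpos by (simp add: divide_right_mono)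
  qed

  have sub: "{c. \<epsilon> < \<bar>F c - \<mu>\<bar>} \<subseteq> {c. t \<le> \<bar>F c - measure_pmf.expectation M F\<bar>}"
    using EFbound by (auto simp: t_def)
  have prob_eq: "measure_pmf.prob (random_graph n x EH \<kappa>)
           {G. \<bar>hom_density k EF n G - mu_F \<kappa> k EF n x\<bar> > \<epsilon>} = measure_pmf.prob M {c. \<epsilon> < \<bar>F c - \<mu>\<bar>}"
    unfolding RG measure_map_pmf by (simp only: F_def \<mu>_def vimage_def mem_Collect_eq)
  show ?thesis
  proof (cases "N * cc\<^sup>2 = 0")
    case True
    have "measure_pmf.prob M {c. \<epsilon> < \<bar>F c - \<mu>\<bar>} \<le> 2" using measure_pmf.prob_le_1 by (rule order.trans) simp
    moreover have z: "- (2 * (\<epsilon> - real m * cc)\<^sup>2) / (N * cc\<^sup>2) = 0" using True by simp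
    ultimately show ?thesis unfolding prob_eq cc_def[symmetric] N_def[symmetric] z by simp
  next
    case False
    have Nnn: "N \<ge> 0" using cardA by (metis of_nat_0_le_iff)
    have Spos: "N * cc\<^sup>2 > 0" using False Nnn by (simp add: less_le)
    have Sdef: "N * cc\<^sup>2 = (\<Sum>a\<in>A. ((\<lambda>_. cc) a)\<^sup>2)" using cardA by simp
    have "measure_pmf.prob M {c. \<epsilon> < \<bar>F c - \<mu>\<bar>} \<le> measure_pmf.prob M {c. t \<le> \<bar>F c - measure_pmf.expectation M F\<bar>}"
      by (rule measure_pmf.finite_measure_mono[OF sub]) simp
    also have "\<dots> \<le> 2 * exp (- 2 * t\<^sup>2 / (N * cc\<^sup>2))"
      unfolding M_def by (rule mcd_abs[OF finA tpos Spos Sdef]) (rule bd[unfolded M_def])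
    finally show ?thesis unfolding prob_eq cc_def[symmetric] N_def[symmetric] t_def[symmetric] by simp
  qed
qed

end
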